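(* Let $\Omega\subseteq\mathbb{R}^d$ be a nonempty open convex set and $F:\Omega\to\mathbb{R}$ a function of Legendre type with Bregman divergence $D_F$. Let $A=\prod_{i=1}^d[a_i,b_i]\subset\mathbb{R}^d$ be an axis-aligned box of positive finite volume (i.e. $a_i<b_i$ real), with boundary $\partial A$. Let $q\in\Omega\setminus A$, let $r\ge 0$ be finite, and let $B$ be the Bregman ball (either the primal ball $\{y\in\Omega: D_F(q\|y)\le r\}$ or the dual ball $\{y\in\Omega: D_F(y\|q)\le r\}$) centered at $q$ of radius $r$. If $B\cap\partial A=\emptyset$, then $A\cap\Omega\subseteq\Omega\setminus B$.
   Context: A function $F:\Omega\to\mathbb{R}$ on a nonempty open convex set $\Omega\subseteq\mathbb{R}^d$ is of Legendre type if (I) it is differentiable, (II) it is strictly convex, and (III) if $\partial\Omega$ is nonempty, then $\|\nabla F(x)\|\to\infty$ as $x\to\partial\Omega$. The Bregman divergence generated by $F$ is $D_F(x\|y)=F(x)-F(y)-\langle\nabla F(y),x-y\rangle$ for $x,y\in\Omega$. *)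

theory Defs
  imports "HOL-Analysis.Analysis"
begin

definition strictly_convex_on :: "'a::real_vector set \<Rightarrow> ('a \<Rightarrow> real) \<Rightarrow> bool" where
  "strictly_convex_on S f \<longleftrightarrow>
     (\<forall>x\<in>S. \<forall>y\<in>S. x \<noteq> y \<longrightarrow> (\<forall>t::real. 0 < t \<and> t < 1 \<longrightarrow>
        f ((1 - t) *\<^sub>R x + t *\<^sub>R y) < (1 - t) * f x + t * f y))"

definition grad :: "('a::euclidean_space \<Rightarrow> real) \<Rightarrow> 'a \<Rightarrow> 'a" where
  "grad F y = (\<Sum>i\<in>Basis. frechet_derivative F (at y) i *\<^sub>R i)"

definition legendre_type :: "'a::euclidean_space set \<Rightarrow> ('a \<Rightarrow> real) \<Rightarrow> bool" where
  "legendre_type \<Omega> F \<longleftrightarrow>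
     (\<forall>x\<in>\<Omega>. F differentiable (at x)) \<and>
     strictly_convex_on \<Omega> F \<and>
     (frontier \<Omega> \<noteq> {} \<longrightarrow>
        (\<forall>z\<in>frontier \<Omega>. filterlim (\<lambda>x. norm (grad F x)) at_top (at z within \<Omega>)))"

definition bregman :: "('a::euclidean_space \<Rightarrow> real) \<Rightarrow> 'a \<Rightarrow> 'a \<Rightarrow> real" where
  "bregman F x y = F x - F y - inner (grad F y) (x - y)"

definition primal_ball :: "'a::euclidean_space set \<Rightarrow> ('a \<Rightarrow> real) \<Rightarrow> 'a \<Rightarrow> real \<Rightarrow> 'a set" where
  "primal_ball \<Omega> F q r = {y\<in>\<Omega>. bregman F q y \<le> r}"

definition dual_ball :: "'a::euclidean_space set \<Rightarrow> ('a \<Rightarrow> real) \<Rightarrow> 'a \<Rightarrow> real \<Rightarrow> 'a set" where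
  "dual_ball \<Omega> F q r = {y\<in>\<Omega>. bregman F y q \<le> r}"

end

theory Submission
  imports Defs
begin

lemma sc_le:
  assumes "strictly_convex_on S f" "x \<in> S" "y \<in> S" "0 \<le> t" "t \<le> 1"
  shows "f ((1 - t) *\<^sub>R x + t *\<^sub>R y) \<le> (1 - t) * f x + t * f y"
proof (cases "x = y \<or> t = 0 \<or> t = 1")
  case True
  then show ?thesis
  proof (elim disjE)
    assume "x = y" then show ?thesis by (simp add: algebra_simps flip: scaleR_add_left)
  qed auto
next
  case False
  then show ?thesis using assms unfolding strictly_convex_on_def by (auto intro: less_imp_le)
qed

lemma grad_inner:
  assumes "F differentiable (at y)"
  shows "inner (grad F y) v = frechet_derivative F (at y) v"
proof -
  let ?D = "frechet_derivative F (at y)"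
  have lin: "linear ?D"
    using assms frechet_derivative_works has_derivative_linear by blast
  have "?D v = ?D (\<Sum>i\<in>Basis. (v \<bullet> i) *\<^sub>R i)" by (simp add: euclidean_representation)
  also have "\<dots> = (\<Sum>i\<in>Basis. (v \<bullet> i) * ?D i)"
    using lin by (simp add: linear_sum linear_scale)
  also have "\<dots> = inner (grad F y) v"
    unfolding grad_def by (simp add: inner_sum_right inner_commute mult.commute)
  finally show ?thesis by simp
qed

lemma tangent:
  assumes "convex S" "strictly_convex_on S F" "F differentiable (at y)" "x \<in> S" "y \<in> S"
  shows "F y + inner (grad F y) (x - y) \<le> F x"
proof -
  let ?D = "frechet_derivative F (at y)"
  define v where "v = x - y"
  define g where "g t = F (y + t *\<^sub>R v)" for t :: real
  have dF: "(F has_derivative ?D) (at y)"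
    using assms(3) frechet_derivative_works by blast
  have lin: "linear ?D" using dF has_derivative_linear by blast
  have "((\<lambda>t::real. y + t *\<^sub>R v) has_derivative (\<lambda>t. t *\<^sub>R v)) (at 0)"
    by (auto intro!: derivative_eq_intros)
  from has_derivative_compose[OF this] dF
  have "(g has_derivative (\<lambda>t. ?D (t *\<^sub>R v))) (at 0)"
    unfolding g_def by simp
  hence "(g has_derivative (\<lambda>t. t * ?D v)) (at 0)"
    using lin by (simp add: linear_scale)
  hence "(g has_field_derivative ?D v) (at 0)"
    by (simp add: has_field_derivative_def mult.commute[of _ "?D v"])
  hence lim: "((\<lambda>t. (g t - g 0) / (t - 0)) \<longlongrightarrow> ?D v) (at_right 0)"
    unfolding has_field_derivative_iff by (rule tendsto_mono[rotated]) (simp add: at_le)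
  have ev: "eventually (\<lambda>t. (g t - g 0) / (t - 0) \<le> F x - F y) (at_right (0::real))"
  proof -
    have "eventually (\<lambda>t. t \<in> {0<..<1}) (at_right (0::real))"
      by (rule eventually_at_right_real) simp
    then show "eventually (\<lambda>t. (g t - g 0) / (t - 0) \<le> F x - F y) (at_right (0::real))"
    proof eventually_elim
      case (elim t)
      hence t: "0 < t" "t < 1" by auto
      have "y + t *\<^sub>R v = (1 - t) *\<^sub>R y + t *\<^sub>R x" by (simp add: v_def algebra_simps)
      hence "g t \<le> (1 - t) * F y + t * F x"
        using sc_le[OF assms(2) assms(5) assms(4), of t] t unfolding g_def by simp
      hence "g t - g 0 \<le> t * (F x - F y)" by (simp add: g_def algebra_simps)
      thus ?case using t by (simp add: divide_le_eq mult.commute)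
    qed
  qed
  have "?D v \<le> F x - F y"
    by (rule tendsto_le[OF _ tendsto_const lim ev]) simp
  thus ?thesis using grad_inner[OF assms(3)] v_def by simp
qed


theorem lemma3:
  fixes \<Omega> :: "'a::euclidean_space set" and F :: "'a \<Rightarrow> real"
    and a b q :: 'a and r :: real and B :: "'a set"
  assumes "\<Omega> \<noteq> {}" and "open \<Omega>" and "convex \<Omega>"
    and "legendre_type \<Omega> F"
    and "\<forall>i\<in>Basis. a \<bullet> i < b \<bullet> i"
    and "q \<in> \<Omega> - cbox a b"
    and "r \<ge> 0"
    and "B = primal_ball \<Omega> F q r \<or> B = dual_ball \<Omega> F q r"
    and "B \<inter> frontier (cbox a b) = {}"
  shows "cbox a b \<inter> \<Omega> \<subseteq> \<Omega> - B"
proof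
  fix y assume y: "y \<in> cbox a b \<inter> \<Omega>"
  have sc: "strictly_convex_on \<Omega> F" and dif: "\<And>x. x \<in> \<Omega> \<Longrightarrow> F differentiable (at x)"
    using assms(4) unfolding legendre_type_def by auto
  have q: "q \<in> \<Omega>" "q \<notin> cbox a b" using assms(6) by auto
  show "y \<in> \<Omega> - B"
  proof (rule ccontr)
    assume "y \<notin> \<Omega> - B"
    hence yB: "y \<in> B" using y by auto
    have seg: "closed_segment q y \<subseteq> B"
    proof
      fix z assume "z \<in> closed_segment q y"
      then obtain t where t: "0 \<le> t" "t \<le> 1" and z: "z = (1 - t) *\<^sub>R q + t *\<^sub>R y"
        unfolding closed_segment_def by auto
      have zO: "z \<in> \<Omega>" using assms(3) q y t z by (simp add: convex_alt)
      define v where "v = y - q"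
      have zv: "z = q + t *\<^sub>R v" using z by (simp add: v_def algebra_simps)
      show "z \<in> B" using assms(8)
      proof
        assume BP: "B = primal_ball \<Omega> F q r"
        have yr: "bregman F q y \<le> r" using yB BP by (simp add: primal_ball_def)
        have "bregman F q z \<le> bregman F q y"
        proof (cases "t = 1")
          case True then show ?thesis using z by simp
        next
          case False
          hence t1: "t < 1" using t by simp
          have T1: "F y + inner (grad F y) (z - y) \<le> F z"
            using tangent[OF assms(3) sc dif] y zO by auto
          have T2: "F z + inner (grad F z) (y - z) \<le> F y"
            using tangent[OF assms(3) sc dif] y zO by auto
          have zy: "z - y = - ((1 - t) *\<^sub>R v)" "y - z = (1 - t) *\<^sub>R v"
            using zv by (auto simp: v_def algebra_simps)
          have "(1 - t) * inner (grad F z) v \<le> (1 - t) * inner (grad F y) v"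
            using T1 T2 unfolding zy by (simp add: inner_scaleR_right)
          hence mono: "inner (grad F z) v \<le> inner (grad F y) v" using t1 by simp
          have qz: "q - z = - (t *\<^sub>R v)" and qy: "q - y = - v" using zv by (auto simp: v_def)
          have "bregman F q z = F q - F z + t * inner (grad F z) v"
            unfolding bregman_def qz by (simp add: inner_scaleR_right)
          moreover have "bregman F q y = F q - F y + inner (grad F y) v"
            unfolding bregman_def qy by simp
          moreover have "t * inner (grad F z) v \<le> t * inner (grad F y) v"
            using mono t by (simp add: mult_left_mono)
          moreover have "F y - (1 - t) * inner (grad F y) v \<le> F z"
            using T1 unfolding zy by (simp add: inner_scaleR_right)
          ultimately show ?thesis by (simp add: algebra_simps)
        qed
        thus "z \<in> B" using yr zO BP by (simp add: primal_ball_def)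
      next
        assume BD: "B = dual_ball \<Omega> F q r"
        have yr: "bregman F y q \<le> r" using yB BD by (simp add: dual_ball_def)
        have nn: "0 \<le> bregman F y q"
          using tangent[OF assms(3) sc dif[OF q(1)], of y] y q by (auto simp: bregman_def)
        have Fz: "F z \<le> (1 - t) * F q + t * F y" using sc_le[OF sc q(1) _ t, of y] y z by auto
        have "bregman F z q = F z - F q - t * inner (grad F q) v"
          unfolding bregman_def using zv by (simp add: inner_scaleR_right)
        also have "\<dots> \<le> t * bregman F y q"
          using Fz unfolding bregman_def v_def by (simp add: algebra_simps)
        also have "\<dots> \<le> bregman F y q" using nn t by (simp add: mult_left_le_one_le)
        finally show "z \<in> B" using yr zO BD by (simp add: dual_ball_def)
      qed
    qed
    have "closed_segment q y \<inter> frontier (cbox a b) \<noteq> {}"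
      by (rule connected_Int_frontier) (use y q in auto)
    thus False using seg assms(9) by blast
  qed
qed

end
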